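(* Let $\beta_{\boldsymbol{i}},\beta_{\boldsymbol{j}}\in\mathcal{B}_{\ell,\ell+1}$ be a problematic pair, and let $\beta_{\boldsymbol{i}}$ be resolved in direction $k\in\{1,2\}$. Then there exists some $\beta_{\boldsymbol{t}}\in S_{\boldsymbol{i},k}$ that is problematic with $\beta_{\boldsymbol{j}}$ and satisfies $|t_k-j_k|<|i_k-j_k|$.
   Context: Fix a hierarchical level $\ell$. In dimension two, for $k=1,2$ let $\Xi_{\ell,k}=(\xi_{1,\ell,k}\le\xi_{2,\ell,k}\le\dots)$ be the level-$\ell$ knot vector with degree $p_{(\ell,k)}$, and $\Xi_{\ell+1,k}=(\xi_{1,\ell+1,k}\le\dots)$ the level-$(\ell+1)$ knot vector with degree $p_{(\ell+1,k)}$. The level-$\ell$ tensor-product B-spline basis is $\mathcal{B}^{\mathbf{0}}_\ell=\{\beta_{\boldsymbol{i}}\}$, $\boldsymbol{i}=(i_1,i_2)\in\mathbb{N}^2$, with $\beta_{\boldsymbol{i}}(x_1,x_2)=\prod_{k}b_{i_k,k}(x_k)$, $b_{i_k,k}$ the univariate B-spline of degree $p_{(\ell,k)}$ on knots $\xi_{i_k,\ell,k},\dots,\xi_{i_k+p_{(\ell,k)}+1,\ell,k}$. $\operatorname{supp}$ denotes the (open) support and $\overline{\operatorname{supp}}$ its closure. Let $\Omega_{\ell+1}$ be a given subdomain and $\mathcal{B}_{\ell,\ell+1}=\{\beta\in\mathcal{B}^{\mathbf{0}}_\ell:\operatorname{supp}(\beta)\subseteq\Omega_{\ell+1}\}$.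 For $\boldsymbol{v}\in\mathbb{Z}^2$, $|\boldsymbol{v}|=|v_1|+|v_2|$; $\boldsymbol{\delta}_k$ is the $k$-th unit vector. Chain between $\beta_{\boldsymbol{i}},\beta_{\boldsymbol{j}}\in\mathcal{B}_{\ell,\ell+1}$: a sequence $\beta_{\boldsymbol{t}_0},\dots,\beta_{\boldsymbol{t}_r}\in\mathcal{B}_{\ell,\ell+1}$ with $\boldsymbol{t}_0=\boldsymbol{i}$, $\boldsymbol{t}_r=\boldsymbol{j}$, $|\boldsymbol{t}_l-\boldsymbol{t}_{l-1}|=1$; it is a shortest chain if $r=\sum_k|j_k-i_k|$. Minimal $(\ell+1)$-intersection: $\beta_{\boldsymbol{i}},\beta_{\boldsymbol{j}}\in\mathcal{B}_{\ell,\ell+1}$ share one if there exist $k_0\in\{1,2\}$ and knots $\xi_{t_1,\ell+1,1}\in\Xi_{\ell+1,1}$, $\xi_{t_2,\ell+1,2}\in\Xi_{\ell+1,2}$ such that $\overline{\operatorname{supp}}(\beta_{\boldsymbol{i}})\cap\overline{\operatorname{supp}}(\beta_{\boldsymbol{j}})\supseteq I_1\times I_2$, where $I_k=(\xi_{t_k,\ell+1,k},\xi_{t_k+p_{(\ell+1,k)},\ell+1,k})$ for $k\ne k_0$ and $I_{k_0}=\{\xi_{t_{k_0},\ell+1,k_0}\}$. Problematic pair: $\beta_{\boldsymbol{i}},\beta_{\boldsymbol{j}}\in\mathcal{B}_{\ell,\ell+1}$ sharing a minimal $(\ell+1)$-intersection such that no shortest chain between them exists. A B-spline is problematic with another if they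 form a problematic pair. $k$-side configuration: $S_{\boldsymbol{i},k}=\{\beta_{\boldsymbol{t}}\in\mathcal{B}^{\mathbf{0}}_\ell:\boldsymbol{t}-\boldsymbol{i}=\pm\boldsymbol{\delta}_k\}$; $\beta_{\boldsymbol{i}}\in\mathcal{B}_{\ell,\ell+1}$ is resolved in direction $k$ if $S_{\boldsymbol{i},k}\subseteq\mathcal{B}_{\ell,\ell+1}$. *)

theory Defs
  imports "HOL-Analysis.Analysis"
begin

text \<open>Directions are k = 1, 2.
  A knot vector in direction k is given by a function X k :: nat => real
  (X k s is the s-th knot, s = 1, ..., m k) with m k knots.\<close>

definition idx :: "nat \<times> nat \<Rightarrow> nat \<Rightarrow> nat" where
  "idx i k = (if k = 1 then fst i else snd i)"

definition coord :: "real \<times> real \<Rightarrow> nat \<Rightarrow> real" where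
  "coord x k = (if k = 1 then fst x else snd x)"

definition knot_vector :: "(nat \<Rightarrow> nat \<Rightarrow> real) \<Rightarrow> (nat \<Rightarrow> nat) \<Rightarrow> bool" where
  "knot_vector X m = (\<forall>k\<in>{1,2}. \<forall>s t. 1 \<le> s \<longrightarrow> s \<le> t \<longrightarrow> t \<le> m k \<longrightarrow> X k s \<le> X k t)"

text \<open>Indices of the tensor-product B-spline basis: b_{i_k,k} uses the knots
  X k i_k, ..., X k (i_k + p k + 1), which must exist.\<close>
definition basis_idx :: "(nat \<Rightarrow> nat) \<Rightarrow> (nat \<Rightarrow> nat) \<Rightarrow> (nat \<times> nat) set" where
  "basis_idx p m = {i. \<forall>k\<in>{1,2}. 1 \<le> idx i k \<and> idx i k + p k + 1 \<le> m k}"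

definition supp :: "(nat \<Rightarrow> nat \<Rightarrow> real) \<Rightarrow> (nat \<Rightarrow> nat) \<Rightarrow> nat \<times> nat \<Rightarrow> (real \<times> real) set" where
  "supp X p i = {x. \<forall>k\<in>{1,2}. X k (idx i k) < coord x k \<and> coord x k < X k (idx i k + p k + 1)}"

definition Bll :: "(nat \<Rightarrow> nat \<Rightarrow> real) \<Rightarrow> (nat \<Rightarrow> nat) \<Rightarrow> (nat \<Rightarrow> nat) \<Rightarrow> (real \<times> real) set
    \<Rightarrow> (nat \<times> nat) set" where
  "Bll X p m Omega = {i \<in> basis_idx p m. supp X p i \<subseteq> Omega}"

definition dist1 :: "nat \<times> nat \<Rightarrow> nat \<times> nat \<Rightarrow> nat" where
  "dist1 i j = nat (\<bar>int (fst j) - int (fst i)\<bar> + \<bar>int (snd j) - int (snd i)\<bar>)"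

definition is_chain :: "(nat \<Rightarrow> nat \<Rightarrow> real) \<Rightarrow> (nat \<Rightarrow> nat) \<Rightarrow> (nat \<Rightarrow> nat) \<Rightarrow> (real \<times> real) set
    \<Rightarrow> nat \<times> nat \<Rightarrow> nat \<times> nat \<Rightarrow> (nat \<Rightarrow> nat \<times> nat) \<Rightarrow> nat \<Rightarrow> bool" where
  "is_chain X p m Omega i j t r =
     (t 0 = i \<and> t r = j \<and> (\<forall>l\<le>r. t l \<in> Bll X p m Omega)
      \<and> (\<forall>l\<in>{1..r}. dist1 (t (l - 1)) (t l) = 1))"

definition shortest_chain_exists :: "(nat \<Rightarrow> nat \<Rightarrow> real) \<Rightarrow> (nat \<Rightarrow> nat) \<Rightarrow> (nat \<Rightarrow> nat)
    \<Rightarrow> (real \<times> real) set \<Rightarrow> nat \<times> nat \<Rightarrow> nat \<times> nat \<Rightarrow> bool" where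
  "shortest_chain_exists X p m Omega i j = (\<exists>t. is_chain X p m Omega i j t (dist1 i j))"

text \<open>Minimal (l+1)-intersection. X', p', m' describe the level-(l+1) knot vectors.
  The open interval (xi_t, xi_{t+p'}) is required to be nondegenerate.\<close>
definition min_intersection :: "(nat \<Rightarrow> nat \<Rightarrow> real) \<Rightarrow> (nat \<Rightarrow> nat)
    \<Rightarrow> (nat \<Rightarrow> nat \<Rightarrow> real) \<Rightarrow> (nat \<Rightarrow> nat) \<Rightarrow> (nat \<Rightarrow> nat)
    \<Rightarrow> nat \<times> nat \<Rightarrow> nat \<times> nat \<Rightarrow> bool" where
  "min_intersection X p X' p' m' i j =
     (\<exists>k0\<in>{1,2}. \<exists>t. 
        (\<forall>k\<in>{1,2}. 1 \<le> idx t k \<and> idx t k \<le> m' k)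
      \<and> (\<forall>k\<in>{1,2}. k \<noteq> k0 \<longrightarrow> idx t k + p' k \<le> m' k
                              \<and> X' k (idx t k) < X' k (idx t k + p' k))
      \<and> (let I = (\<lambda>k. if k = k0 then {X' k (idx t k)}
                       else {X' k (idx t k) <..< X' k (idx t k + p' k)})
         in I 1 \<times> I 2 \<subseteq> closure (supp X p i) \<inter> closure (supp X p j)))"

definition problematic :: "(nat \<Rightarrow> nat \<Rightarrow> real) \<Rightarrow> (nat \<Rightarrow> nat) \<Rightarrow> (nat \<Rightarrow> nat)
    \<Rightarrow> (nat \<Rightarrow> nat \<Rightarrow> real) \<Rightarrow> (nat \<Rightarrow> nat) \<Rightarrow> (nat \<Rightarrow> nat)
    \<Rightarrow> (real \<times> real) set \<Rightarrow> nat \<times> nat \<Rightarrow> nat \<times> nat \<Rightarrow> bool" where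
  "problematic X p m X' p' m' Omega i j =
     (i \<in> Bll X p m Omega \<and> j \<in> Bll X p m Omega
      \<and> min_intersection X p X' p' m' i j
      \<and> \<not> shortest_chain_exists X p m Omega i j)"

definition side_config :: "(nat \<Rightarrow> nat) \<Rightarrow> (nat \<Rightarrow> nat) \<Rightarrow> nat \<times> nat \<Rightarrow> nat \<Rightarrow> (nat \<times> nat) set" where
  "side_config p m i k = {t \<in> basis_idx p m.
      (\<forall>k'\<in>{1,2}. k' \<noteq> k \<longrightarrow> idx t k' = idx i k')
      \<and> \<bar>int (idx t k) - int (idx i k)\<bar> = 1}"

definition resolved :: "(nat \<Rightarrow> nat \<Rightarrow> real) \<Rightarrow> (nat \<Rightarrow> nat) \<Rightarrow> (nat \<Rightarrow> nat)
    \<Rightarrow> (real \<times> real) set \<Rightarrow> nat \<times> nat \<Rightarrow> nat \<Rightarrow> bool" where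
  "resolved X p m Omega i k = (i \<in> Bll X p m Omega \<and> side_config p m i k \<subseteq> Bll X p m Omega)"

end

theory Submission
  imports Defs
begin

definition upd :: "nat \<times> nat \<Rightarrow> nat \<Rightarrow> nat \<Rightarrow> nat \<times> nat" where
  "upd s k v = (if k = 1 then (v, snd s) else (fst s, v))"

definition tw :: "nat \<Rightarrow> nat \<Rightarrow> nat" where
  "tw a b = (if a < b then a + 1 else a - 1)"

lemma idx_upd_same: "k \<in> {1,2} \<Longrightarrow> idx (upd s k v) k = v"
  by (auto simp: idx_def upd_def)

lemma idx_upd_other: "k \<in> {1,2} \<Longrightarrow> k' \<in> {1,2} \<Longrightarrow> k' \<noteq> k \<Longrightarrow> idx (upd s k v) k' = idx s k'"
  by (auto simp: idx_def upd_def)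

lemma all12: "(k::nat) \<in> {1,2} \<Longrightarrow> k' = 3 - k \<Longrightarrow> (\<forall>kk\<in>{1,2}. P kk) \<longleftrightarrow> P k \<and> P k'"
  by auto

lemma pair_eq_idx: "k \<in> {1,2} \<Longrightarrow> k' = 3 - k \<Longrightarrow> s = t \<longleftrightarrow> idx s k = idx t k \<and> idx s k' = idx t k'"
  by (cases s; cases t; auto simp: idx_def)

lemma dist1_kk: "k \<in> {1,2} \<Longrightarrow> k' = 3 - k \<Longrightarrow>
   dist1 s t = nat (\<bar>int (idx t k) - int (idx s k)\<bar> + \<bar>int (idx t k') - int (idx s k')\<bar>)"
  by (auto simp: dist1_def idx_def)

lemma chain_base: "j \<in> Bll X p m Omega \<Longrightarrow> shortest_chain_exists X p m Omega j j"
  unfolding shortest_chain_exists_def is_chain_def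
  by (rule exI[of _ "\<lambda>_. j"]) (simp add: dist1_def)

lemma chain_prepend:
  assumes "i \<in> Bll X p m Omega" "shortest_chain_exists X p m Omega t j"
    "dist1 i t = 1" "dist1 i j = dist1 t j + 1"
  shows "shortest_chain_exists X p m Omega i j"
proof -
  obtain c where c: "is_chain X p m Omega t j c (dist1 t j)"
    using assms(2) unfolding shortest_chain_exists_def by blast
  define c' where "c' l = (if l = 0 then i else c (l - 1))" for l
  have "is_chain X p m Omega i j c' (dist1 i j)"
    unfolding is_chain_def
  proof (intro conjI ballI allI impI)
    show "c' 0 = i" by (simp add: c'_def)
    show "c' (dist1 i j) = j" using c assms(4) by (simp add: c'_def is_chain_def)
    fix l assume "l \<le> dist1 i j"
    then show "c' l \<in> Bll X p m Omega" using c assms(1,4)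
      by (auto simp: c'_def is_chain_def)
  next
    fix l assume l: "l \<in> {1..dist1 i j}"
    show "dist1 (c' (l - 1)) (c' l) = 1"
    proof (cases "l = 1")
      case True then show ?thesis using c assms(3) by (simp add: c'_def is_chain_def)
    next
      case False
      then have "l - 1 \<in> {1..dist1 t j}" using l assms(4) by auto
      moreover have "\<forall>l\<in>{1..dist1 t j}. dist1 (c (l - 1)) (c l) = 1" using c by (simp add: is_chain_def)
      ultimately have "dist1 (c (l - 1 - 1)) (c (l - 1)) = 1" by blast
      then show ?thesis using False l by (simp add: c'_def)
    qed
  qed
  then show ?thesis unfolding shortest_chain_exists_def by blast
qed

definition btw :: "nat \<Rightarrow> nat \<Rightarrow> nat \<Rightarrow> bool" where
  "btw a b x = (min a b \<le> x \<and> x \<le> max a b)"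

lemma L_chain:
  assumes k: "k \<in> {1,2}" "k' = 3 - k"
  shows "n = dist1 s0 j \<Longrightarrow> (\<forall>s. (idx s k = idx s0 k \<and> btw (idx s0 k') (idx j k') (idx s k'))
      \<or> (idx s k' = idx j k' \<and> btw (idx s0 k) (idx j k) (idx s k)) \<longrightarrow> s \<in> Bll X p m Omega)
    \<Longrightarrow> shortest_chain_exists X p m Omega s0 j"
proof (induction n arbitrary: s0)
  case 0
  then have "s0 = j" using pair_eq_idx[OF k, of s0 j] dist1_kk[OF k, of s0 j] by auto
  moreover have "j \<in> Bll X p m Omega" using 0(2)[rule_format, of j] by (auto simp: btw_def)
  ultimately show ?case using chain_base[of j] by auto
next
  case (Suc n)
  have k'12: "k' \<in> {1,2}" "k' \<noteq> k" "k \<noteq> k'" using k by auto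
  have s0B: "s0 \<in> Bll X p m Omega" using Suc.prems(2)[rule_format, of s0] by (auto simp: btw_def)
  show ?case
  proof (cases "idx s0 k' = idx j k'")
    case False
    define s1 where "s1 = upd s0 k' (tw (idx s0 k') (idx j k'))"
    have i1: "idx s1 k' = tw (idx s0 k') (idx j k')" "idx s1 k = idx s0 k"
      unfolding s1_def using k'12 k by (auto simp: idx_upd_same idx_upd_other)
    have d1: "dist1 s0 s1 = 1" using dist1_kk[OF k, of s0 s1] i1 False by (auto simp: tw_def)
    have d2: "dist1 s0 j = dist1 s1 j + 1" using dist1_kk[OF k, of s0 j] dist1_kk[OF k, of s1 j] i1 False
      by (auto simp: tw_def)
    have "shortest_chain_exists X p m Omega s1 j"
    proof (rule Suc.IH)
      show "n = dist1 s1 j" using d2 Suc.prems(1) by simp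
      show "\<forall>s. (idx s k = idx s1 k \<and> btw (idx s1 k') (idx j k') (idx s k'))
      \<or> (idx s k' = idx j k' \<and> btw (idx s1 k) (idx j k) (idx s k)) \<longrightarrow> s \<in> Bll X p m Omega"
      proof (intro allI impI)
        fix s assume "(idx s k = idx s1 k \<and> btw (idx s1 k') (idx j k') (idx s k'))
      \<or> (idx s k' = idx j k' \<and> btw (idx s1 k) (idx j k) (idx s k))"
        then have "(idx s k = idx s0 k \<and> btw (idx s0 k') (idx j k') (idx s k'))
      \<or> (idx s k' = idx j k' \<and> btw (idx s0 k) (idx j k) (idx s k))"
          using i1 False by (auto simp: btw_def tw_def split: if_splits)
        then show "s \<in> Bll X p m Omega" using Suc.prems(2) by blast
      qed
    qed
    then show ?thesis using chain_prepend[OF s0B _ d1 d2] by blast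
  next
    case True
    then have F: "idx s0 k \<noteq> idx j k" using Suc.prems(1) dist1_kk[OF k, of s0 j] by auto
    define s1 where "s1 = upd s0 k (tw (idx s0 k) (idx j k))"
    have i1: "idx s1 k = tw (idx s0 k) (idx j k)" "idx s1 k' = idx s0 k'"
      unfolding s1_def using k'12 k by (auto simp: idx_upd_same idx_upd_other)
    have d1: "dist1 s0 s1 = 1" using dist1_kk[OF k, of s0 s1] i1 F by (auto simp: tw_def)
    have d2: "dist1 s0 j = dist1 s1 j + 1" using dist1_kk[OF k, of s0 j] dist1_kk[OF k, of s1 j] i1 F True
      by (auto simp: tw_def)
    have "shortest_chain_exists X p m Omega s1 j"
    proof (rule Suc.IH)
      show "n = dist1 s1 j" using d2 Suc.prems(1) by simp
      show "\<forall>s. (idx s k = idx s1 k \<and> btw (idx s1 k') (idx j k') (idx s k'))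
      \<or> (idx s k' = idx j k' \<and> btw (idx s1 k) (idx j k) (idx s k)) \<longrightarrow> s \<in> Bll X p m Omega"
      proof (intro allI impI)
        fix s assume "(idx s k = idx s1 k \<and> btw (idx s1 k') (idx j k') (idx s k'))
      \<or> (idx s k' = idx j k' \<and> btw (idx s1 k) (idx j k) (idx s k))"
        then have "(idx s k = idx s0 k \<and> btw (idx s0 k') (idx j k') (idx s k'))
      \<or> (idx s k' = idx j k' \<and> btw (idx s0 k) (idx j k) (idx s k))"
          using i1 F True by (auto simp: btw_def tw_def split: if_splits)
        then show "s \<in> Bll X p m Omega" using Suc.prems(2) by blast
      qed
    qed
    then show ?thesis using chain_prepend[OF s0B _ d1 d2] by blast
  qed
qed

lemma supp_Times: "supp X p s = {X 1 (fst s)<..<X 1 (fst s + p 1 + 1)} \<times> {X 2 (snd s)<..<X 2 (snd s + p 2 + 1)}"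
  by (auto simp: supp_def idx_def coord_def)

lemma closure_supp: "x \<in> closure (supp X p s) \<longleftrightarrow>
   (\<forall>kk\<in>{1,2}. X kk (idx s kk) < X kk (idx s kk + p kk + 1)) \<and>
   (\<forall>kk\<in>{1,2}. X kk (idx s kk) \<le> coord x kk \<and> coord x kk \<le> X kk (idx s kk + p kk + 1))"
proof (cases "X 1 (fst s) < X 1 (fst s + p 1 + 1) \<and> X 2 (snd s) < X 2 (snd s + p 2 + 1)")
  case True
  then show ?thesis unfolding supp_Times closure_Times
    by (cases x) (auto simp: idx_def coord_def closure_greaterThanLessThan)
next
  case False
  then have "supp X p s = {}" unfolding supp_Times by auto
  then show ?thesis using False by (auto simp: idx_def)
qed

lemma kv_mono: "knot_vector X m \<Longrightarrow> kk \<in> {1,2} \<Longrightarrow> 1 \<le> u \<Longrightarrow> u \<le> v \<Longrightarrow> v \<le> m kk \<Longrightarrow> X kk u \<le> X kk v"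
  unfolding knot_vector_def by blast

lemma mono_btw: "knot_vector X m \<Longrightarrow> kk \<in> {1,2} \<Longrightarrow> 1 \<le> u \<Longrightarrow> u + q + 1 \<le> m kk \<Longrightarrow>
  1 \<le> v \<Longrightarrow> v + q + 1 \<le> m kk \<Longrightarrow> btw u v w \<Longrightarrow>
  (X kk u \<le> X kk w \<and> X kk w \<le> X kk v \<and> X kk (u+q+1) \<le> X kk (w+q+1) \<and> X kk (w+q+1) \<le> X kk (v+q+1))
  \<or> (X kk v \<le> X kk w \<and> X kk w \<le> X kk u \<and> X kk (v+q+1) \<le> X kk (w+q+1) \<and> X kk (w+q+1) \<le> X kk (u+q+1))"
proof (cases "u \<le> v")
  case True
  assume h: "knot_vector X m" "kk \<in> {1,2}" "1 \<le> u" "u + q + 1 \<le> m kk" "1 \<le> v" "v + q + 1 \<le> m kk" "btw u v w"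
  then have "u \<le> w" "w \<le> v" using True by (auto simp: btw_def)
  then show ?thesis using h kv_mono[OF h(1,2), of u w] kv_mono[OF h(1,2), of w v]
     kv_mono[OF h(1,2), of "u+q+1" "w+q+1"] kv_mono[OF h(1,2), of "w+q+1" "v+q+1"] by auto
next
  case False
  assume h: "knot_vector X m" "kk \<in> {1,2}" "1 \<le> u" "u + q + 1 \<le> m kk" "1 \<le> v" "v + q + 1 \<le> m kk" "btw u v w"
  then have "v \<le> w" "w \<le> u" using False by (auto simp: btw_def)
  then show ?thesis using h kv_mono[OF h(1,2), of v w] kv_mono[OF h(1,2), of w u]
     kv_mono[OF h(1,2), of "v+q+1" "w+q+1"] kv_mono[OF h(1,2), of "w+q+1" "u+q+1"] by auto
qed

lemma cover1: "(li \<le> ls \<and> ls \<le> lj \<and> hi \<le> hs \<and> hs \<le> hj) \<or> (lj \<le> ls \<and> ls \<le> li \<and> hj \<le> hs \<and> hs \<le> hi)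
  \<Longrightarrow> lj \<le> hi \<Longrightarrow> li \<le> hj \<Longrightarrow> ls < y \<Longrightarrow> y < hs \<Longrightarrow> (li \<le> y \<and> y \<le> hi) \<or> (lj \<le> y \<and> y \<le> (hj::real))"
  by linarith

theorem mainTheorem3:
  fixes X X' :: "nat \<Rightarrow> nat \<Rightarrow> real" and p m p' m' :: "nat \<Rightarrow> nat"
    and Omega :: "(real \<times> real) set" and i j :: "nat \<times> nat" and k :: nat
  assumes "knot_vector X m" and "knot_vector X' m'"
    and "closed Omega"
    and "k \<in> {1,2}"
    and "problematic X p m X' p' m' Omega i j"
    and "resolved X p m Omega i k"
  shows "\<exists>t\<in>side_config p m i k. problematic X p m X' p' m' Omega t j
           \<and> \<bar>int (idx t k) - int (idx j k)\<bar> < \<bar>int (idx i k) - int (idx j k)\<bar>"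
proof -
  note kv = assms(1)
  have k: "k \<in> {1,2}" using assms(4) .
  define k' where "k' = 3 - k"
  have k'12: "k' \<in> {1,2}" "k' \<noteq> k" "k \<noteq> k'" using k by (auto simp: k'_def)
  note A = all12[OF k k'_def]
  have iB: "i \<in> Bll X p m Omega" and jB: "j \<in> Bll X p m Omega"
    and MI: "min_intersection X p X' p' m' i j"
    and NS: "\<not> shortest_chain_exists X p m Omega i j"
    using assms(5) by (auto simp: problematic_def)
  have bi: "1 \<le> idx i k" "idx i k + p k + 1 \<le> m k" "1 \<le> idx i k'" "idx i k' + p k' + 1 \<le> m k'"
    using iB k k'12 by (auto simp: Bll_def basis_idx_def)
  have bj: "1 \<le> idx j k" "idx j k + p k + 1 \<le> m k" "1 \<le> idx j k'" "idx j k' + p k' + 1 \<le> m k'"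
    using jB k k'12 by (auto simp: Bll_def basis_idx_def)
  have iO: "closure (supp X p i) \<subseteq> Omega"
    using iB assms(3) closure_minimal[of "supp X p i" Omega] by (auto simp: Bll_def)
  have jO: "closure (supp X p j) \<subseteq> Omega"
    using jB assms(3) closure_minimal[of "supp X p j" Omega] by (auto simp: Bll_def)
  define II where "II k0 t0 kk = (if kk = k0 then {X' kk (idx t0 kk)}
     else {X' kk (idx t0 kk)<..<X' kk (idx t0 kk + p' kk)})" for k0 t0 kk
  obtain k0 t0 where k0: "k0 \<in> {1,2}"
    and t0a: "\<forall>kk\<in>{1,2}. 1 \<le> idx t0 kk \<and> idx t0 kk \<le> m' kk"
    and t0b: "\<forall>kk\<in>{1,2}. kk \<noteq> k0 \<longrightarrow> idx t0 kk + p' kk \<le> m' kk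
                              \<and> X' kk (idx t0 kk) < X' kk (idx t0 kk + p' kk)"
    and sub: "II k0 t0 1 \<times> II k0 t0 2 \<subseteq> closure (supp X p i) \<inter> closure (supp X p j)"
    using MI unfolding min_intersection_def Let_def II_def by blast
  have "II k0 t0 1 \<noteq> {}" "II k0 t0 2 \<noteq> {}" using t0b k0 by (auto simp: II_def)
  then obtain x where "x \<in> II k0 t0 1 \<times> II k0 t0 2" by blast
  then have x: "x \<in> closure (supp X p i)" "x \<in> closure (supp X p j)" using sub by auto
  have nei: "X k (idx i k) < X k (idx i k + p k + 1)" "X k' (idx i k') < X k' (idx i k' + p k' + 1)"
   and xi: "X k (idx i k) \<le> coord x k" "coord x k \<le> X k (idx i k + p k + 1)"
           "X k' (idx i k') \<le> coord x k'" "coord x k' \<le> X k' (idx i k' + p k' + 1)"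
    using x(1) unfolding closure_supp A by auto
  have nej: "X k (idx j k) < X k (idx j k + p k + 1)" "X k' (idx j k') < X k' (idx j k' + p k' + 1)"
   and xj: "X k (idx j k) \<le> coord x k" "coord x k \<le> X k (idx j k + p k + 1)"
           "X k' (idx j k') \<le> coord x k'" "coord x k' \<le> X k' (idx j k' + p k' + 1)"
    using x(2) unfolding closure_supp A by auto
  have ne: "idx i k \<noteq> idx j k"
  proof
    assume eq: "idx i k = idx j k"
    have "shortest_chain_exists X p m Omega i j"
    proof (rule L_chain[OF k k'_def refl])
      show "\<forall>s. (idx s k = idx i k \<and> btw (idx i k') (idx j k') (idx s k'))
       \<or> (idx s k' = idx j k' \<and> btw (idx i k) (idx j k) (idx s k)) \<longrightarrow> s \<in> Bll X p m Omega"
      proof (intro allI impI)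
        fix s assume "(idx s k = idx i k \<and> btw (idx i k') (idx j k') (idx s k'))
         \<or> (idx s k' = idx j k' \<and> btw (idx i k) (idx j k) (idx s k))"
        then have s1: "idx s k = idx i k" and s2: "btw (idx i k') (idx j k') (idx s k')"
          using eq by (auto simp: btw_def)
        have sb: "1 \<le> idx s k'" "idx s k' + p k' + 1 \<le> m k'"
          using s2 bi bj by (auto simp: btw_def)
        have "s \<in> basis_idx p m" unfolding basis_idx_def A using s1 sb bi by auto
        moreover have "supp X p s \<subseteq> Omega"
        proof
          fix y assume "y \<in> supp X p s"
          then have y: "X k (idx s k) < coord y k" "coord y k < X k (idx s k + p k + 1)"
            "X k' (idx s k') < coord y k'" "coord y k' < X k' (idx s k' + p k' + 1)"
            unfolding supp_def A by auto
          have M: "(X k' (idx i k') \<le> X k' (idx s k') \<and> X k' (idx s k') \<le> X k' (idx j k') \<and>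
              X k' (idx i k' + p k' + 1) \<le> X k' (idx s k' + p k' + 1) \<and> X k' (idx s k' + p k' + 1) \<le> X k' (idx j k' + p k' + 1))
            \<or> (X k' (idx j k') \<le> X k' (idx s k') \<and> X k' (idx s k') \<le> X k' (idx i k') \<and>
              X k' (idx j k' + p k' + 1) \<le> X k' (idx s k' + p k' + 1) \<and> X k' (idx s k' + p k' + 1) \<le> X k' (idx i k' + p k' + 1))"
            using mono_btw[OF kv k'12(1) bi(3,4) bj(3,4) s2] .
          have C: "(X k' (idx i k') \<le> coord y k' \<and> coord y k' \<le> X k' (idx i k' + p k' + 1))
            \<or> (X k' (idx j k') \<le> coord y k' \<and> coord y k' \<le> X k' (idx j k' + p k' + 1))"
            apply (rule cover1[OF M])
            using xi xj y by linarith+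
          then have "y \<in> closure (supp X p i) \<or> y \<in> closure (supp X p j)"
            unfolding closure_supp A using nei nej y s1 eq by auto
          then show "y \<in> Omega" using iO jO by blast
        qed
        ultimately show "s \<in> Bll X p m Omega" by (simp add: Bll_def)
      qed
    qed
    with NS show False by simp
  qed
  define a where "a = idx i k"
  define b where "b = idx j k"
  define P where "P = p k"
  define c where "c = tw a b"
  define t where "t = upd i k c"
  have tk: "idx t k = c" and tk': "idx t k' = idx i k'"
    unfolding t_def using k k'12 by (auto simp: idx_upd_same idx_upd_other)
  have cab: "btw a b c" "\<bar>int c - int a\<bar> = 1" "\<bar>int c - int b\<bar> < \<bar>int a - int b\<bar>"
    using ne by (auto simp: c_def tw_def btw_def a_def b_def)
  have tb: "1 \<le> c" "c + P + 1 \<le> m k" using cab(1) bi bj by (auto simp: btw_def a_def b_def P_def)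
  have tBasis: "t \<in> basis_idx p m" unfolding basis_idx_def A using tk tk' tb bi by (auto simp: P_def)
  have tS: "t \<in> side_config p m i k"
    unfolding side_config_def using tBasis tk cab k
    by (auto simp: t_def idx_upd_other a_def)
  have tB: "t \<in> Bll X p m Omega" using assms(6) tS by (auto simp: resolved_def)
  have d1: "dist1 i t = 1" using dist1_kk[OF k k'_def, of i t] tk tk' cab(2) by (simp add: a_def)
  have d2: "dist1 i j = dist1 t j + 1" using dist1_kk[OF k k'_def, of i j] dist1_kk[OF k k'_def, of t j] tk tk' ne
    by (auto simp: c_def tw_def a_def b_def)
  have NSt: "\<not> shortest_chain_exists X p m Omega t j"
    using chain_prepend[OF iB _ d1 d2] NS by blast
  have ndeg: "X k c < X k (c + P + 1)"
  proof (rule ccontr)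
    assume deg: "\<not> X k c < X k (c + P + 1)"
    have "shortest_chain_exists X p m Omega t j"
    proof (rule L_chain[OF k k'_def refl])
      show "\<forall>s. (idx s k = idx t k \<and> btw (idx t k') (idx j k') (idx s k'))
       \<or> (idx s k' = idx j k' \<and> btw (idx t k) (idx j k) (idx s k)) \<longrightarrow> s \<in> Bll X p m Omega"
      proof (intro allI impI)
        fix s assume H: "(idx s k = idx t k \<and> btw (idx t k') (idx j k') (idx s k'))
         \<or> (idx s k' = idx j k' \<and> btw (idx t k) (idx j k) (idx s k))"
        then show "s \<in> Bll X p m Omega"
        proof
          assume H1: "idx s k = idx t k \<and> btw (idx t k') (idx j k') (idx s k')"
          have sb: "1 \<le> idx s k'" "idx s k' + p k' + 1 \<le> m k'"
            using H1 tk' bi bj by (auto simp: btw_def)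
          have "s \<in> basis_idx p m" unfolding basis_idx_def A using H1 sb tb tk by (auto simp: P_def)
          moreover have "supp X p s = {}"
          proof -
            { fix y assume "y \<in> supp X p s"
              then have "X k (idx s k) < coord y k" "coord y k < X k (idx s k + p k + 1)"
                unfolding supp_def A by auto
              then have False using deg H1 tk by (auto simp: P_def) }
            then show ?thesis by blast
          qed
          ultimately show ?thesis by (simp add: Bll_def)
        next
          assume H2: "idx s k' = idx j k' \<and> btw (idx t k) (idx j k) (idx s k)"
          define w where "w = idx s k"
          have wb: "btw c b w" using H2 tk by (simp add: w_def b_def)
          have sb: "1 \<le> w" "w + P + 1 \<le> m k"
            using wb tb bj by (auto simp: btw_def b_def P_def)
          have lohi: "X k b \<le> X k w \<and> X k (w + P + 1) \<le> X k (b + P + 1)"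
          proof (cases "a < b")
            case True
            then have "c = a + 1" by (simp add: c_def tw_def)
            then have cw: "c \<le> w" "w \<le> b" using wb True by (auto simp: btw_def)
            have "X k (a + P + 1) \<le> X k (c + P + 1)" using kv_mono[OF kv k, of "a+P+1" "c+P+1"] tb \<open>c = a+1\<close> by auto
            moreover have "X k c \<le> X k w" using kv_mono[OF kv k, of c w] tb cw sb by auto
            moreover have "X k (w+P+1) \<le> X k (b+P+1)" using kv_mono[OF kv k, of "w+P+1" "b+P+1"] tb cw sb bj by (auto simp: b_def P_def)
            moreover have "X k w \<le> X k b" using kv_mono[OF kv k, of w b] cw sb bj by (auto simp: b_def P_def)
            moreover have "X k b \<le> X k (a+P+1)" using xi xj by (simp add: a_def b_def P_def)
            ultimately show ?thesis using deg by linarith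
          next
            case False
            then have "b < a" using ne by (simp add: a_def b_def)
            then have "c = a - 1" using False by (simp add: c_def tw_def)
            then have cw: "b \<le> w" "w \<le> c" using wb \<open>b < a\<close> by (auto simp: btw_def)
            have "X k c \<le> X k a" using kv_mono[OF kv k, of c a] tb bi \<open>c = a - 1\<close> by (auto simp: a_def)
            moreover have "X k b \<le> X k w" using kv_mono[OF kv k, of b w] bj cw sb by (auto simp: b_def)
            moreover have "X k (w+P+1) \<le> X k (c+P+1)" using kv_mono[OF kv k, of "w+P+1" "c+P+1"] tb cw sb by auto
            moreover have "X k a \<le> X k (b+P+1)" using xi xj by (simp add: a_def b_def P_def)
            ultimately show ?thesis using deg by linarith
          qed
          have "s \<in> basis_idx p m" unfolding basis_idx_def A using H2 sb bj by (auto simp: P_def w_def)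
          moreover have "supp X p s \<subseteq> supp X p j"
          proof
            fix y assume "y \<in> supp X p s"
            then have "X k (idx s k) < coord y k" "coord y k < X k (idx s k + p k + 1)"
              "X k' (idx s k') < coord y k'" "coord y k' < X k' (idx s k' + p k' + 1)"
              unfolding supp_def A by auto
            then show "y \<in> supp X p j" unfolding supp_def A using lohi H2
              by (auto simp: w_def b_def P_def)
          qed
          moreover have "supp X p j \<subseteq> Omega" using jB by (simp add: Bll_def)
          ultimately show ?thesis by (auto simp: Bll_def)
        qed
      qed
    qed
    with NSt show False by simp
  qed
  have MIt: "min_intersection X p X' p' m' t j"
  proof -
    have "II k0 t0 1 \<times> II k0 t0 2 \<subseteq> closure (supp X p t) \<inter> closure (supp X p j)"
    proof
      fix y assume "y \<in> II k0 t0 1 \<times> II k0 t0 2"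
      then have y: "y \<in> closure (supp X p i)" "y \<in> closure (supp X p j)" using sub by auto
      have yi: "X k a \<le> coord y k" "coord y k \<le> X k (a + P + 1)"
           "X k' (idx i k') \<le> coord y k'" "coord y k' \<le> X k' (idx i k' + p k' + 1)"
        using y(1) unfolding closure_supp A by (auto simp: a_def P_def)
      have yj: "X k b \<le> coord y k" "coord y k \<le> X k (b + P + 1)"
        using y(2) unfolding closure_supp A by (auto simp: b_def P_def)
      have "X k c \<le> coord y k \<and> coord y k \<le> X k (c + P + 1)"
      proof (cases "a < b")
        case True
        then have "c = a + 1" by (simp add: c_def tw_def)
        then have cw: "c \<le> b" using True by auto
        have "X k (a + P + 1) \<le> X k (c + P + 1)" using kv_mono[OF kv k, of "a+P+1" "c+P+1"] tb \<open>c = a+1\<close> by auto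
        moreover have "X k c \<le> X k b" using kv_mono[OF kv k, of c b] tb cw bj by (auto simp: b_def)
        ultimately show ?thesis using yi yj by linarith
      next
        case False
        then have "b < a" using ne by (simp add: a_def b_def)
        then have "c = a - 1" using False by (simp add: c_def tw_def)
        then have cw: "b \<le> c" using \<open>b < a\<close> by auto
        have "X k c \<le> X k a" using kv_mono[OF kv k, of c a] tb bi \<open>c = a - 1\<close> by (auto simp: a_def)
        moreover have "X k (b+P+1) \<le> X k (c+P+1)" using kv_mono[OF kv k, of "b+P+1" "c+P+1"] tb cw bj by (auto simp: b_def P_def)
        ultimately show ?thesis using yi yj by linarith
      qed
      then have "y \<in> closure (supp X p t)" unfolding closure_supp A
        using tk tk' ndeg nei yi by (auto simp: P_def)
      then show "y \<in> closure (supp X p t) \<inter> closure (supp X p j)" using y by blast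
    qed
    then show ?thesis unfolding min_intersection_def Let_def
      using k0 t0a t0b unfolding II_def by blast
  qed
  have "problematic X p m X' p' m' Omega t j" unfolding problematic_def using tB jB MIt NSt by blast
  moreover have "\<bar>int (idx t k) - int (idx j k)\<bar> < \<bar>int (idx i k) - int (idx j k)\<bar>"
    using cab(3) tk by (simp add: a_def b_def)
  ultimately show ?thesis using tS by blast
qed

end
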